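(* Let $A=\Gamma_R(Rx)$ be the free $DP$ algebra on one generator $x$, so that $A$ is the free $R$-module on $\{\gamma_n(x):n\ge1\}$. Write $\gamma_n=\gamma_n(x)$, $\gamma_0=1\in A_+$, and $\phi_n=\phi_n(dx)\in\Omega^{CA}_{A/R}$, where $\Omega^{CA}_{A/R}$ carries the $U(A)$-module structure for which $d$ is a $DP$ derivation. Then for every $n\ge1$: $$d\gamma_n=\sum_{i=0}^{n-1}\gamma_i\,\phi_{n-i}\qquad\text{and}\qquad \phi_n=\sum_{i=0}^{n-1}(-1)^i\gamma_i\,d\gamma_{n-i},$$ and as an $A_+$-module $$\Omega^{CA}_{A/R}\cong A_+\cdot dx\ \oplus\ \bigoplus_{p\ \text{prime}}\ \bigoplus_{e\ge1}(A_+/pA_+)\cdot\phi_{p^e},$$ where $A_+\cdot dx$ is free on $dx=d\gamma_1$ and each summand $(A_+/pA_+)\cdot\phi_{p^e}$ is cyclic generated by $\phi_{p^e}$ and isomorphic to $A_+/pA_+$.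
   Context: Fix a commutative unital ring $R$. An "algebra" means a commutative, not necessarily unital, $R$-algebra. A $DP$ algebra is an algebra $A$ with maps $\gamma_n:A\to A$ ($n\ge1$) such that for all $a,b\in A$, $r\in R$, $m,n\ge1$: $\gamma_1(a)=a$; $\gamma_n(a+b)=\gamma_n(a)+\sum_{i+j=n,\,i,j\ge1}\gamma_i(a)\gamma_j(b)+\gamma_n(b)$; $\gamma_n(ab)=a^n\gamma_n(b)$; $\gamma_n(rb)=r^n\gamma_n(b)$; $\gamma_m(a)\gamma_n(a)=\frac{(m+n)!}{m!\,n!}\gamma_{m+n}(a)$; $\gamma_m(\gamma_n(a))=\frac{(mn)!}{m!(n!)^m}\gamma_{mn}(a)$. $\Gamma_R(Rx)$ is the free $DP$ algebra on the free rank-one $R$-module with basis $x$. $A_+=A\oplus R$ is the unital algebra with $(a,r)(b,s)=(ab+sa+rb,rs)$. $\Omega^{CA}_{A/R}=(A_+\otimes A)/(a\otimes b-1\otimes ab+b\otimes a)$ with $da=[1\otimes a]$. A left $U(A)$-module is an $A_+$-module $M$ with pairwise commuting additive operators $\phi_p$ ($p$ prime) satisfying $p\phi_p=0$, $\phi_p(rx)=r^p\phi_p(x)$ for $r\in R$, and $\phi_p(ax)=0$ for $a\in A$; set $\phi_1=\mathrm{id}$, $\phi_{p^e}=\phi_p^e$, $\phi_n=0$ for $n>1$ not a prime power. A $DP$ derivation $s:A\to M$ is an $R$-linear map with $s(ab)=as(b)+bs(a)$ and $s(\gamma_n a)=\phi_n(sa)+\sum_{i+j=n,\,i,j\ge1}\gamma_i(a)\phi_j(sa)$.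 There is a unique $U(A)$-module structure on $\Omega^{CA}_{A/R}$ extending its $A_+$-module structure for which $d$ is a $DP$ derivation; this is the structure used. *)

theory Defs
  imports "HOL-Library.Poly_Mapping" "HOL-Number_Theory.Number_Theory"
begin

text \<open>Elements of A_+ = Gamma_R(Rx) (+) R are finitely supported coefficient
 sequences: the coefficient at n is that of gamma_n(x), with gamma_0 = 1.
 A itself is the subset with vanishing coefficient at 0.
 NOTE: the multiplication of A_+ is dpmult below, NOT the convolution
 product of the Poly_Mapping type, which is never used.\<close>

type_synonym 'r dpa = "nat \<Rightarrow>\<^sub>0 'r"

definition dpA :: "'r::comm_ring_1 dpa set" where
  "dpA = {a. Poly_Mapping.lookup a 0 = 0}"

definition gam :: "nat \<Rightarrow> 'r::comm_ring_1 dpa" where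
  "gam n = Poly_Mapping.single n 1"

definition dpmult :: "'r::comm_ring_1 dpa \<Rightarrow> 'r dpa \<Rightarrow> 'r dpa" where
  "dpmult a b = (\<Sum>i\<in>Poly_Mapping.keys a. \<Sum>j\<in>Poly_Mapping.keys b.
      Poly_Mapping.single (i + j) (of_nat ((i + j) choose i) * Poly_Mapping.lookup a i * Poly_Mapping.lookup b j))"

definition dpsmult :: "'r::comm_ring_1 \<Rightarrow> 'r dpa \<Rightarrow> 'r dpa" where
  "dpsmult r a = Poly_Mapping.map ((*) r) a"

definition dppow :: "'r::comm_ring_1 dpa \<Rightarrow> nat \<Rightarrow> 'r dpa" where
  "dppow a n = ((dpmult a) ^^ n) (gam 0)"

text \<open>DP structure on A (maps gamma_n : A -> A, n >= 1) satisfying the axioms,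
 and sending x = gamma_1 to the basis element gamma_n. Such a structure is the
 one of the free DP algebra Gamma_R(Rx).\<close>
definition is_DP_structure :: "(nat \<Rightarrow> 'r::comm_ring_1 dpa \<Rightarrow> 'r dpa) \<Rightarrow> bool" where
  "is_DP_structure g \<longleftrightarrow>
     (\<forall>n\<ge>1. \<forall>a\<in>dpA. g n a \<in> dpA) \<and>
     (\<forall>a\<in>dpA. g 1 a = a) \<and>
     (\<forall>n\<ge>1. \<forall>a\<in>dpA. \<forall>b\<in>dpA.
        g n (a + b) = g n a + (\<Sum>i\<in>{1..<n}. dpmult (g i a) (g (n - i) b)) + g n b) \<and>
     (\<forall>n\<ge>1. \<forall>a\<in>dpA. \<forall>b\<in>dpA. g n (dpmult a b) = dpmult (dppow a n) (g n b)) \<and>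
     (\<forall>n\<ge>1. \<forall>r. \<forall>b\<in>dpA. g n (dpsmult r b) = dpsmult (r ^ n) (g n b)) \<and>
     (\<forall>m\<ge>1. \<forall>n\<ge>1. \<forall>a\<in>dpA.
        dpmult (g m a) (g n a) = dpsmult (of_nat ((m + n) choose m)) (g (m + n) a)) \<and>
     (\<forall>m\<ge>1. \<forall>n\<ge>1. \<forall>a\<in>dpA.
        g m (g n a) = dpsmult (of_nat (fact (m * n) div (fact m * fact n ^ m))) (g (m * n) a))"

definition is_free_DP_structure :: "(nat \<Rightarrow> 'r::comm_ring_1 dpa \<Rightarrow> 'r dpa) \<Rightarrow> bool" where
  "is_free_DP_structure g \<longleftrightarrow> is_DP_structure g \<and> (\<forall>n\<ge>1. g n (gam 1) = gam n)"

text \<open>A_+ (x)_R A is realised inside the free R-module on pairs (i,j)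
 (basis gamma_i (x) gamma_j), as those elements supported on j >= 1
 (A is a direct summand of the free module A_+).\<close>

type_synonym 'r ten = "(nat \<times> nat) \<Rightarrow>\<^sub>0 'r"

definition tenspace :: "'r::comm_ring_1 ten set" where
  "tenspace = {t. \<forall>k\<in>Poly_Mapping.keys t. 1 \<le> snd k}"

definition ten :: "'r::comm_ring_1 dpa \<Rightarrow> 'r dpa \<Rightarrow> 'r ten" where
  "ten a b = (\<Sum>i\<in>Poly_Mapping.keys a. \<Sum>j\<in>Poly_Mapping.keys b. Poly_Mapping.single (i, j) (Poly_Mapping.lookup a i * Poly_Mapping.lookup b j))"

definition tsmult :: "'r::comm_ring_1 \<Rightarrow> 'r ten \<Rightarrow> 'r ten" where
  "tsmult r t = Poly_Mapping.map ((*) r) t"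

definition tact :: "'r::comm_ring_1 dpa \<Rightarrow> 'r ten \<Rightarrow> 'r ten" where
  "tact a t = (\<Sum>k\<in>Poly_Mapping.keys t. tsmult (Poly_Mapping.lookup t k) (ten (dpmult a (gam (fst k))) (gam (snd k))))"

inductive_set Krel :: "'r::comm_ring_1 ten set" where
  Krel_zero: "0 \<in> Krel"
| Krel_gen: "a \<in> dpA \<Longrightarrow> b \<in> dpA \<Longrightarrow> ten a b - ten (gam 0) (dpmult a b) + ten b a \<in> Krel"
| Krel_add: "x \<in> Krel \<Longrightarrow> y \<in> Krel \<Longrightarrow> x + y \<in> Krel"
| Krel_smult: "x \<in> Krel \<Longrightarrow> tsmult r x \<in> Krel"
| Krel_act: "x \<in> Krel \<Longrightarrow> tact c x \<in> Krel"

definition omeq :: "'r::comm_ring_1 ten \<Rightarrow> 'r ten \<Rightarrow> bool" where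
  "omeq s t \<longleftrightarrow> s - t \<in> Krel"

definition dd :: "'r::comm_ring_1 dpa \<Rightarrow> 'r ten" where
  "dd a = ten (gam 0) a"

text \<open>ph p is the operator phi_p (p prime), acting on representatives.\<close>
definition is_UA_structure :: "(nat \<Rightarrow> 'r::comm_ring_1 ten \<Rightarrow> 'r ten) \<Rightarrow> bool" where
  "is_UA_structure ph \<longleftrightarrow>
    (\<forall>p. prime p \<longrightarrow>
      (\<forall>t\<in>tenspace. ph p t \<in> tenspace) \<and>
      (\<forall>s\<in>tenspace. \<forall>t\<in>tenspace. omeq s t \<longrightarrow> omeq (ph p s) (ph p t)) \<and>
      (\<forall>s\<in>tenspace. \<forall>t\<in>tenspace. omeq (ph p (s + t)) (ph p s + ph p t)) \<and>
      (\<forall>t\<in>tenspace. omeq (tsmult (of_nat p) (ph p t)) 0) \<and>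
      (\<forall>r. \<forall>t\<in>tenspace. omeq (ph p (tsmult r t)) (tsmult (r ^ p) (ph p t))) \<and>
      (\<forall>a\<in>dpA. \<forall>t\<in>tenspace. omeq (ph p (tact a t)) 0) \<and>
      (\<forall>q. prime q \<longrightarrow> (\<forall>t\<in>tenspace. omeq (ph p (ph q t)) (ph q (ph p t)))))"

definition phin :: "(nat \<Rightarrow> 'r::comm_ring_1 ten \<Rightarrow> 'r ten) \<Rightarrow> nat \<Rightarrow> 'r ten \<Rightarrow> 'r ten" where
  "phin ph n t = (if n = 1 then t
     else if primepow n then (ph (aprimedivisor n) ^^ multiplicity (aprimedivisor n) n) t
     else 0)"

text \<open>d is a DP derivation (R-linearity and the Leibniz rule hold for d
 automatically by construction of Omega; the DP condition is imposed).\<close>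
definition is_DP_derivation_d ::
  "(nat \<Rightarrow> 'r::comm_ring_1 dpa \<Rightarrow> 'r dpa) \<Rightarrow> (nat \<Rightarrow> 'r ten \<Rightarrow> 'r ten) \<Rightarrow> bool" where
  "is_DP_derivation_d g ph \<longleftrightarrow>
    (\<forall>n\<ge>1. \<forall>a\<in>dpA. omeq (dd (g n a))
        (phin ph n (dd a) + (\<Sum>i\<in>{1..<n}. tact (g i a) (phin ph (n - i) (dd a)))))"

end

theory Submission
  imports Defs
begin


definition lext :: "('k \<Rightarrow> 'r::zero \<Rightarrow> 'm::comm_monoid_add) \<Rightarrow> ('k \<Rightarrow>\<^sub>0 'r) \<Rightarrow> 'm" where
  "lext f a = (\<Sum>k\<in>Poly_Mapping.keys a. f k (Poly_Mapping.lookup a k))"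

lemma lext_superset:
  assumes "finite S" "Poly_Mapping.keys a \<subseteq> S" "\<And>k. f k 0 = 0"
  shows "lext f a = (\<Sum>k\<in>S. f k (Poly_Mapping.lookup a k))"
  unfolding lext_def using assms
  by (intro sum.mono_neutral_left) (auto simp: in_keys_iff)

lemma lext_single: "f k 0 = 0 \<Longrightarrow> lext f (Poly_Mapping.single k v) = f k v"
  by (simp add: lext_def)

lemma lext_zero [simp]: "lext f 0 = 0"
  by (simp add: lext_def)

lemma lext_add:
  fixes f :: "'k \<Rightarrow> 'r::monoid_add \<Rightarrow> 'm::comm_monoid_add"
  assumes "\<And>k. f k 0 = 0" "\<And>k x y. f k (x + y) = f k x + f k y"
  shows "lext f (a + b) = lext f a + lext f b"
proof -
  let ?S = "Poly_Mapping.keys a \<union> Poly_Mapping.keys b"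
  have "lext f (a + b) = (\<Sum>k\<in>?S. f k (Poly_Mapping.lookup (a+b) k))"
    by (intro lext_superset) (use keys_add[of a b] in \<open>auto simp: assms\<close>)
  also have "\<dots> = (\<Sum>k\<in>?S. f k (Poly_Mapping.lookup a k)) + (\<Sum>k\<in>?S. f k (Poly_Mapping.lookup b k))"
    by (simp add: lookup_add assms sum.distrib)
  also have "\<dots> = lext f a + lext f b"
    by (subst (1 2) lext_superset[symmetric]) (auto simp: assms)
  finally show ?thesis .
qed

lemma lext_fadd: "lext (\<lambda>k v. f k v + g k v) a = lext f a + lext g a"
  by (simp add: lext_def sum.distrib)

lemma lext_fzero [simp]: "lext (\<lambda>k v. 0) a = 0"
  by (simp add: lext_def)

lemma pm_monomials: "a = (\<Sum>k\<in>Poly_Mapping.keys a. Poly_Mapping.single k (Poly_Mapping.lookup a k))"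
  by (rule poly_mapping_eqI) (simp add: lookup_sum lookup_single when_def in_keys_iff)

definition addv :: "('a::ab_group_add \<Rightarrow> 'b::ab_group_add) \<Rightarrow> bool" where
  "addv F \<longleftrightarrow> (\<forall>x y. F (x + y) = F x + F y)"

lemma addv_zero: "addv F \<Longrightarrow> F 0 = 0"
proof -
  assume a: "addv F"
  have "F (0 + 0) = F 0 + F 0" using a unfolding addv_def by blast
  then show ?thesis by simp
qed

lemma addv_sum:
  assumes a: "addv F" shows "F (sum h S) = (\<Sum>x\<in>S. F (h x))"
proof (induction S rule: infinite_finite_induct)
  case (infinite A) then show ?case using addv_zero[OF a] by simp
next
  case empty then show ?case using addv_zero[OF a] by simp
next
  case (insert x S)
  have "F (h x + sum h S) = F (h x) + F (sum h S)" using a unfolding addv_def by blast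
  then show ?case using insert by simp
qed

lemma addv_minus: "addv F \<Longrightarrow> F (- x) = - F x"
proof -
  assume a: "addv F"
  have "F (- x + x) = F (- x) + F x" using a unfolding addv_def by blast
  then have "F (- x) + F x = 0" using addv_zero[OF a] by simp
  then show ?thesis by (simp add: eq_neg_iff_add_eq_0)
qed

lemma addv_diff: "addv F \<Longrightarrow> F (x - y) = F x - F y"
proof -
  assume a: "addv F"
  have "F (x + - y) = F x + F (- y)" using a unfolding addv_def by blast
  then show ?thesis using addv_minus[OF a, of y] by simp
qed

lemma addv_rep: "addv F \<Longrightarrow> F a = lext (\<lambda>k v. F (Poly_Mapping.single k v)) a"
proof -
  assume a: "addv F"
  have "F a = F (\<Sum>k\<in>Poly_Mapping.keys a. Poly_Mapping.single k (Poly_Mapping.lookup a k))"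
    by (rule arg_cong[OF pm_monomials])
  also have "\<dots> = lext (\<lambda>k v. F (Poly_Mapping.single k v)) a"
    unfolding lext_def by (rule addv_sum[OF a])
  finally show ?thesis .
qed

lemma additive_eq:
  assumes "addv F" "addv G" "\<And>k v. F (Poly_Mapping.single k v) = G (Poly_Mapping.single k v)"
  shows "F a = G a"
proof -
  have "F a = lext (\<lambda>k v. F (Poly_Mapping.single k v)) a" by (rule addv_rep[OF assms(1)])
  also have "\<dots> = lext (\<lambda>k v. G (Poly_Mapping.single k v)) a" using assms(3) by simp
  also have "\<dots> = G a" by (rule addv_rep[OF assms(2), symmetric])
  finally show ?thesis .
qed

lemma lookup_smap: "Poly_Mapping.lookup (Poly_Mapping.map ((*) (r::'r::comm_ring_1)) a) k = r * Poly_Mapping.lookup a k"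
  by (simp add: map.rep_eq when_def)

lemma smap_add: "Poly_Mapping.map ((*) (r::'r::comm_ring_1)) (a + b) = Poly_Mapping.map ((*) r) a + Poly_Mapping.map ((*) r) b"
  by (rule poly_mapping_eqI) (simp add: lookup_smap lookup_add algebra_simps)

lemma smap_radd: "Poly_Mapping.map ((*) (r + s::'r::comm_ring_1)) a = Poly_Mapping.map ((*) r) a + Poly_Mapping.map ((*) s) a"
  by (rule poly_mapping_eqI) (simp add: lookup_smap lookup_add algebra_simps)

lemma smap_smap: "Poly_Mapping.map ((*) (r::'r::comm_ring_1)) (Poly_Mapping.map ((*) s) a) = Poly_Mapping.map ((*) (r * s)) a"
  by (rule poly_mapping_eqI) (simp add: lookup_smap algebra_simps)

lemma smap_one [simp]: "Poly_Mapping.map ((*) (1::'r::comm_ring_1)) a = a"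
  by (rule poly_mapping_eqI) (simp add: lookup_smap)

lemma smap_rzero [simp]: "Poly_Mapping.map ((*) (0::'r::comm_ring_1)) a = 0"
  by (rule poly_mapping_eqI) (simp add: lookup_smap)

lemma smap_zero [simp]: "Poly_Mapping.map ((*) (r::'r::comm_ring_1)) 0 = 0"
  by (rule poly_mapping_eqI) (simp add: lookup_smap)

lemma smap_minus_one: "Poly_Mapping.map ((*) (-1::'r::comm_ring_1)) a = - a"
  by (rule poly_mapping_eqI) (simp add: lookup_smap)

lemma smap_single [simp]: "Poly_Mapping.map ((*) (r::'r::comm_ring_1)) (Poly_Mapping.single k v) = Poly_Mapping.single k (r * v)"
  by simp

lemma addv_smap: "addv (Poly_Mapping.map ((*) (r::'r::comm_ring_1)))"
  by (simp add: addv_def smap_add)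

lemma smap_sum: "Poly_Mapping.map ((*) (r::'r::comm_ring_1)) (sum h S) = (\<Sum>x\<in>S. Poly_Mapping.map ((*) r) (h x))"
  by (rule addv_sum[OF addv_smap])

lemma smap_rsum: "Poly_Mapping.map ((*) (sum h S::'r::comm_ring_1)) a = (\<Sum>x\<in>S. Poly_Mapping.map ((*) (h x)) a)"
  by (rule poly_mapping_eqI) (simp add: lookup_smap lookup_sum sum_distrib_right)

lemma dpmult_lext: "dpmult a b = lext (\<lambda>i x. lext (\<lambda>j y. Poly_Mapping.single (i + j) (of_nat ((i + j) choose i) * x * y)) b) a"
  by (simp add: dpmult_def lext_def)

lemma dpmult_single [simp]: "dpmult (Poly_Mapping.single i x) (Poly_Mapping.single j y) =
   Poly_Mapping.single (i + j) (of_nat ((i + j) choose i) * x * y)"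
  by (simp add: dpmult_lext lext_single)

lemma dpmult_addl: "dpmult (a + a') b = dpmult a b + dpmult a' b"
  unfolding dpmult_lext
  by (rule lext_add) (simp_all add: distrib_left distrib_right single_add lext_fadd[symmetric])

lemma dpmult_addr: "dpmult a (b + b') = dpmult a b + dpmult a b'"
  unfolding dpmult_lext
  by (subst lext_fadd[symmetric], rule arg_cong[where f="\<lambda>f. lext f a"], rule ext, rule ext,
      rule lext_add) (simp_all add: distrib_left distrib_right single_add)

lemma addv_dpmult1: "addv (\<lambda>a. dpmult a b)" by (simp add: addv_def dpmult_addl)
lemma addv_dpmult2: "addv (\<lambda>b. dpmult a b)" by (simp add: addv_def dpmult_addr)

lemma ten_lext: "ten a b = lext (\<lambda>i x. lext (\<lambda>j y. Poly_Mapping.single (i, j) (x * y)) b) a"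
  by (simp add: ten_def lext_def)

lemma ten_single [simp]: "ten (Poly_Mapping.single i x) (Poly_Mapping.single j y) = Poly_Mapping.single (i, j) (x * y)"
  by (simp add: ten_lext lext_single)

lemma ten_addl: "ten (a + a') b = ten a b + ten a' b"
  unfolding ten_lext
  by (rule lext_add) (simp_all add: distrib_left distrib_right single_add lext_fadd[symmetric])

lemma ten_addr: "ten a (b + b') = ten a b + ten a b'"
  unfolding ten_lext
  by (subst lext_fadd[symmetric], rule arg_cong[where f="\<lambda>f. lext f a"], rule ext, rule ext,
      rule lext_add) (simp_all add: distrib_left distrib_right single_add)

lemma addv_ten1: "addv (\<lambda>a. ten a b)" by (simp add: addv_def ten_addl)
lemma addv_ten2: "addv (\<lambda>b. ten a b)" by (simp add: addv_def ten_addr)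

lemma tact_lext: "tact c t = lext (\<lambda>k v. tsmult v (ten (dpmult c (gam (fst k))) (gam (snd k)))) t"
  by (simp add: tact_def lext_def)

lemma tact_single: "tact c (Poly_Mapping.single k v) = tsmult v (ten (dpmult c (gam (fst k))) (gam (snd k)))"
  by (simp add: tact_lext lext_single tsmult_def)

lemma tact_addr: "tact c (t + t') = tact c t + tact c t'"
  unfolding tact_lext by (rule lext_add) (simp_all add: tsmult_def smap_radd)

lemma tact_addl: "tact (c + c') t = tact c t + tact c' t"
  unfolding tact_lext by (simp add: lext_fadd[symmetric] dpmult_addl ten_addl tsmult_def smap_add)

lemma addv_tact1: "addv (\<lambda>c. tact c t)" by (simp add: addv_def tact_addl)
lemma addv_tact2: "addv (\<lambda>t. tact c t)" by (simp add: addv_def tact_addr)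

lemma tact_ss: "tact (Poly_Mapping.single m w) (Poly_Mapping.single (i, j) v) =
   Poly_Mapping.single (m + i, j) (v * (of_nat ((m + i) choose m) * w))"
  by (simp add: tact_single gam_def tsmult_def)


declare single_one [simp del]

lemma additive_eq':
  assumes "addv F" "addv G" "\<And>k v. F (Poly_Mapping.single k v) = G (Poly_Mapping.single k v)"
  shows "F = G"
  using additive_eq[OF assms] by (rule ext)

lemma addv_comp: "addv F \<Longrightarrow> addv G \<Longrightarrow> addv (\<lambda>x. F (G x))"
  by (simp add: addv_def)

lemma addv_id: "addv (\<lambda>x. x)" by (simp add: addv_def)

lemma multinom: "((a+b+c) choose (a+b)) * ((a+b) choose a) = ((a+b+c) choose a) * ((b+c) choose b)"
  using choose_mult_lemma[of b c a] by (simp add: add_ac)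

lemma tact_gam0: "tact (gam 0) t = t"
proof -
  have "(\<lambda>t. tact (gam 0) t) = (\<lambda>t. t)"
    by (rule additive_eq') (auto simp: addv_tact2 addv_id gam_def tact_ss)
  from fun_cong[OF this, of t] show ?thesis by simp
qed

lemma tact_assoc_ss:
  "tact (Poly_Mapping.single m w) (tact (Poly_Mapping.single n u) (Poly_Mapping.single (i, j) v)) =
   tact (dpmult (Poly_Mapping.single m w) (Poly_Mapping.single n u)) (Poly_Mapping.single (i, j) v)"
proof -
  have e: "of_nat ((m+n+i) choose (m+n)) * of_nat ((m+n) choose m) =
           (of_nat ((m+n+i) choose m) * of_nat ((n+i) choose n) :: 'a::comm_ring_1)"
    using arg_cong[OF multinom[of m n i], where f="of_nat :: nat \<Rightarrow> 'a"] by simp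
  show ?thesis
    apply (simp add: tact_ss add.assoc)
    using e by (simp add: algebra_simps add.assoc)
qed

lemma tact_assoc: "tact a (tact b t) = tact (dpmult a b) t"
proof -
  have "(\<lambda>t. tact a (tact b t)) = (\<lambda>t. tact (dpmult a b) t)"
  proof (rule additive_eq')
    show "addv (\<lambda>t. tact a (tact b t))" by (rule addv_comp[OF addv_tact2 addv_tact2])
    show "addv (\<lambda>t. tact (dpmult a b) t)" by (rule addv_tact2)
    fix k :: "nat \<times> nat" and v
    obtain i j where k: "k = (i, j)" by (cases k) auto
    have "(\<lambda>a. tact a (tact b (Poly_Mapping.single (i, j) v))) = (\<lambda>a. tact (dpmult a b) (Poly_Mapping.single (i, j) v))"
    proof (rule additive_eq')
      show "addv (\<lambda>a. tact a (tact b (Poly_Mapping.single (i, j) v)))" by (rule addv_tact1)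
      show "addv (\<lambda>a. tact (dpmult a b) (Poly_Mapping.single (i, j) v))"
        by (rule addv_comp[OF addv_tact1 addv_dpmult1])
      fix m w
      have "(\<lambda>b. tact (Poly_Mapping.single m w) (tact b (Poly_Mapping.single (i, j) v))) =
            (\<lambda>b. tact (dpmult (Poly_Mapping.single m w) b) (Poly_Mapping.single (i, j) v))"
      proof (rule additive_eq')
        show "addv (\<lambda>b. tact (Poly_Mapping.single m w) (tact b (Poly_Mapping.single (i, j) v)))"
          by (rule addv_comp[OF addv_tact2 addv_tact1])
        show "addv (\<lambda>b. tact (dpmult (Poly_Mapping.single m w) b) (Poly_Mapping.single (i, j) v))"
          by (rule addv_comp[OF addv_tact1 addv_dpmult2])
        fix n u show "tact (Poly_Mapping.single m w) (tact (Poly_Mapping.single n u) (Poly_Mapping.single (i, j) v)) =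
          tact (dpmult (Poly_Mapping.single m w) (Poly_Mapping.single n u)) (Poly_Mapping.single (i, j) v)"
          by (rule tact_assoc_ss)
      qed
      from fun_cong[OF this, of b]
      show "tact (Poly_Mapping.single m w) (tact b (Poly_Mapping.single (i, j) v)) =
          tact (dpmult (Poly_Mapping.single m w) b) (Poly_Mapping.single (i, j) v)" by simp
    qed
    from fun_cong[OF this, of a] k
    show "tact a (tact b (Poly_Mapping.single k v)) = tact (dpmult a b) (Poly_Mapping.single k v)" by simp
  qed
  from fun_cong[OF this, of t] show ?thesis by simp
qed

lemma dpsmult_single [simp]: "dpsmult r (Poly_Mapping.single k v) = Poly_Mapping.single k (r * v)"
  by (simp add: dpsmult_def)

lemma tsmult_single [simp]: "tsmult r (Poly_Mapping.single k v) = Poly_Mapping.single k (r * v)"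
  by (simp add: tsmult_def)

lemma addv_dpsmult: "addv (dpsmult r)" unfolding dpsmult_def by (rule addv_smap)
lemma addv_tsmult: "addv (tsmult r)" unfolding tsmult_def by (rule addv_smap)

lemma tact_smult_l: "tact (dpsmult r c) t = tsmult r (tact c t)"
proof -
  have "(\<lambda>c. tact (dpsmult r c) t) = (\<lambda>c. tsmult r (tact c t))"
  proof (rule additive_eq')
    show "addv (\<lambda>c. tact (dpsmult r c) t)" by (rule addv_comp[OF addv_tact1 addv_dpsmult])
    show "addv (\<lambda>c. tsmult r (tact c t))" by (rule addv_comp[OF addv_tsmult addv_tact1])
    fix m w
    have "(\<lambda>t. tact (dpsmult r (Poly_Mapping.single m w)) t) = (\<lambda>t. tsmult r (tact (Poly_Mapping.single m w) t))"
    proof (rule additive_eq')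
      show "addv (tact (dpsmult r (Poly_Mapping.single m w)))" by (rule addv_tact2)
      show "addv (\<lambda>t. tsmult r (tact (Poly_Mapping.single m w) t))" by (rule addv_comp[OF addv_tsmult addv_tact2])
      fix k :: "nat \<times> nat" and v
      obtain i j where k: "k = (i, j)" by (cases k) auto
      show "tact (dpsmult r (Poly_Mapping.single m w)) (Poly_Mapping.single k v) =
          tsmult r (tact (Poly_Mapping.single m w) (Poly_Mapping.single k v))"
        by (simp add: k tact_ss algebra_simps)
    qed
    from fun_cong[OF this, of t] show "tact (dpsmult r (Poly_Mapping.single m w)) t = tsmult r (tact (Poly_Mapping.single m w) t)" by simp
  qed
  from fun_cong[OF this, of c] show ?thesis by simp
qed

lemma tact_smult_r: "tact c (tsmult r t) = tsmult r (tact c t)"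
proof -
  have "(\<lambda>t. tact c (tsmult r t)) = (\<lambda>t. tsmult r (tact c t))"
  proof (rule additive_eq')
    show "addv (\<lambda>t. tact c (tsmult r t))" by (rule addv_comp[OF addv_tact2 addv_tsmult])
    show "addv (\<lambda>t. tsmult r (tact c t))" by (rule addv_comp[OF addv_tsmult addv_tact2])
    fix k :: "nat \<times> nat" and v
    obtain i j where k: "k = (i, j)" by (cases k) auto
    have "(\<lambda>c. tact c (tsmult r (Poly_Mapping.single k v))) = (\<lambda>c. tsmult r (tact c (Poly_Mapping.single k v)))"
    proof (rule additive_eq')
      show "addv (\<lambda>c. tact c (tsmult r (Poly_Mapping.single k v)))" by (rule addv_tact1)
      show "addv (\<lambda>c. tsmult r (tact c (Poly_Mapping.single k v)))" by (rule addv_comp[OF addv_tsmult addv_tact1])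
      fix m w
      show "tact (Poly_Mapping.single m w) (tsmult r (Poly_Mapping.single k v)) =
          tsmult r (tact (Poly_Mapping.single m w) (Poly_Mapping.single k v))"
        by (simp add: k tact_ss algebra_simps)
    qed
    from fun_cong[OF this, of c] show "tact c (tsmult r (Poly_Mapping.single k v)) = tsmult r (tact c (Poly_Mapping.single k v))" by simp
  qed
  from fun_cong[OF this, of t] show ?thesis by simp
qed

lemma tact_zero_r [simp]: "tact c 0 = 0" using addv_zero[OF addv_tact2] .
lemma tact_zero_l [simp]: "tact 0 t = 0" using addv_zero[OF addv_tact1[of t]] .
lemma tact_sum_r: "tact c (sum h S) = (\<Sum>x\<in>S. tact c (h x))" using addv_sum[OF addv_tact2] .
lemma tact_sum_l: "tact (sum h S) t = (\<Sum>x\<in>S. tact (h x) t)" using addv_sum[OF addv_tact1] .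
lemma tact_diff_r: "tact c (s - t) = tact c s - tact c t" using addv_diff[OF addv_tact2] .
lemma tact_minus_r: "tact c (- t) = - tact c t" using addv_minus[OF addv_tact2] .

lemma dd_gam: "dd (gam j) = Poly_Mapping.single (0, j) 1"
  by (simp add: dd_def gam_def)

lemma tact_gam_dd: "tact (gam i) (dd (gam j)) = Poly_Mapping.single (i, j) 1"
  unfolding dd_gam by (simp add: gam_def tact_ss)

lemma dpmult_gam0r: "dpmult a (gam 0) = a"
proof -
  have "(\<lambda>a. dpmult a (gam 0)) = (\<lambda>a. a)"
    by (rule additive_eq') (auto simp: addv_dpmult1 addv_id gam_def)
  from fun_cong[OF this, of a] show ?thesis by simp
qed

lemma dpmult_smultr: "dpmult c (dpsmult r x) = dpsmult r (dpmult c x)"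
proof -
  have "(\<lambda>x. dpmult c (dpsmult r x)) = (\<lambda>x. dpsmult r (dpmult c x))"
  proof (rule additive_eq')
    show "addv (\<lambda>x. dpmult c (dpsmult r x))" by (rule addv_comp[OF addv_dpmult2 addv_dpsmult])
    show "addv (\<lambda>x. dpsmult r (dpmult c x))" by (rule addv_comp[OF addv_dpsmult addv_dpmult2])
    fix k v
    have "(\<lambda>c. dpmult c (dpsmult r (Poly_Mapping.single k v))) = (\<lambda>c. dpsmult r (dpmult c (Poly_Mapping.single k v)))"
    proof (rule additive_eq')
      show "addv (\<lambda>c. dpmult c (dpsmult r (Poly_Mapping.single k v)))" by (rule addv_dpmult1)
      show "addv (\<lambda>c. dpsmult r (dpmult c (Poly_Mapping.single k v)))" by (rule addv_comp[OF addv_dpsmult addv_dpmult1])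
      fix m w show "dpmult (Poly_Mapping.single m w) (dpsmult r (Poly_Mapping.single k v)) =
        dpsmult r (dpmult (Poly_Mapping.single m w) (Poly_Mapping.single k v))"
        by (simp add: mult.left_commute)
    qed
    from fun_cong[OF this, of c] show "dpmult c (dpsmult r (Poly_Mapping.single k v)) = dpsmult r (dpmult c (Poly_Mapping.single k v))" by simp
  qed
  from fun_cong[OF this, of x] show ?thesis by simp
qed

lemma dpmult_gg: "dpmult (gam i) (gam j) = dpsmult (of_nat ((i + j) choose i)) (gam (i + j))"
  by (simp add: gam_def)

lemma tsmult_add_r: "tsmult r (s + t) = tsmult r s + tsmult r t" unfolding tsmult_def by (rule smap_add)
lemma tsmult_add_l: "tsmult (r + r') t = tsmult r t + tsmult r' t" unfolding tsmult_def by (rule smap_radd)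
lemma tsmult_tsmult: "tsmult r (tsmult s t) = tsmult (r * s) t" unfolding tsmult_def by (rule smap_smap)
lemma tsmult_one [simp]: "tsmult 1 t = t" unfolding tsmult_def by simp
lemma tsmult_rzero [simp]: "tsmult 0 t = 0" unfolding tsmult_def by simp
lemma tsmult_zero [simp]: "tsmult r 0 = 0" unfolding tsmult_def by simp
lemma tsmult_m1: "tsmult (-1) t = - t" unfolding tsmult_def by (rule smap_minus_one)
lemma tsmult_sum_r: "tsmult r (sum h S) = (\<Sum>x\<in>S. tsmult r (h x))" unfolding tsmult_def by (rule smap_sum)
lemma tsmult_sum_l: "tsmult (sum h S) t = (\<Sum>x\<in>S. tsmult (h x) t)" unfolding tsmult_def by (rule smap_rsum)
lemma tsmult_diff_r: "tsmult r (s - t) = tsmult r s - tsmult r t" using addv_diff[OF addv_tsmult] .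

lemma dpsmult_add_r: "dpsmult r (s + t) = dpsmult r s + dpsmult r t" unfolding dpsmult_def by (rule smap_add)
lemma dpsmult_dpsmult: "dpsmult r (dpsmult s t) = dpsmult (r * s) t" unfolding dpsmult_def by (rule smap_smap)
lemma dpsmult_one [simp]: "dpsmult 1 t = t" unfolding dpsmult_def by simp
lemma dpsmult_zero [simp]: "dpsmult r 0 = 0" unfolding dpsmult_def by simp
lemma dpsmult_rzero [simp]: "dpsmult 0 t = 0" unfolding dpsmult_def by simp
lemma dpsmult_m1: "dpsmult (-1) t = - t" unfolding dpsmult_def by (rule smap_minus_one)

lemma dpmult_zero_r [simp]: "dpmult a 0 = 0" using addv_zero[OF addv_dpmult2] .
lemma dpmult_zero_l [simp]: "dpmult 0 b = 0" using addv_zero[OF addv_dpmult1[of b]] .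


lemma Krel_neg: "x \<in> Krel \<Longrightarrow> - x \<in> Krel"
proof -
  assume "x \<in> Krel"
  then have "tsmult (-1) x \<in> Krel" by (rule Krel_smult)
  then show ?thesis by (simp only: tsmult_m1)
qed

lemma Krel_diff: "x \<in> Krel \<Longrightarrow> y \<in> Krel \<Longrightarrow> x - y \<in> Krel"
proof -
  assume "x \<in> Krel" "y \<in> Krel"
  then have "x + - y \<in> Krel" by (intro Krel_add Krel_neg)
  then show ?thesis by (simp only: diff_conv_add_uminus)
qed

lemma Krel_sum: "(\<And>x. x \<in> S \<Longrightarrow> h x \<in> Krel) \<Longrightarrow> sum h S \<in> Krel"
proof (induction S rule: infinite_finite_induct)
  case (infinite A) then show ?case by (simp add: Krel_zero)
next
  case empty then show ?case by (simp add: Krel_zero)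
next
  case (insert x F)
  then have "h x \<in> Krel" "sum h F \<in> Krel" by auto
  then have "h x + sum h F \<in> Krel" by (rule Krel_add)
  then show ?case using insert(1,2) by simp
qed

lemma omeq_refl: "omeq s s" by (simp add: omeq_def Krel_zero)
lemma omeq_eq: "s = t \<Longrightarrow> omeq s t" by (simp add: omeq_refl)
lemma omeq_sym: "omeq s t \<Longrightarrow> omeq t s"
proof -
  assume "omeq s t"
  then have "- (s - t) \<in> Krel" unfolding omeq_def by (rule Krel_neg)
  then show ?thesis unfolding omeq_def by simp
qed
lemma omeq_trans: "omeq s t \<Longrightarrow> omeq t u \<Longrightarrow> omeq s u"
proof -
  assume "omeq s t" "omeq t u"
  then have "(s - t) + (t - u) \<in> Krel" unfolding omeq_def by (rule Krel_add)
  then show ?thesis unfolding omeq_def by simp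
qed
lemma omeq_add: "omeq s s' \<Longrightarrow> omeq t t' \<Longrightarrow> omeq (s + t) (s' + t')"
proof -
  assume "omeq s s'" "omeq t t'"
  then have "(s - s') + (t - t') \<in> Krel" unfolding omeq_def by (rule Krel_add)
  moreover have "(s - s') + (t - t') = (s + t) - (s' + t')" by (simp add: algebra_simps)
  ultimately show ?thesis unfolding omeq_def by simp
qed
lemma omeq_tact: "omeq s t \<Longrightarrow> omeq (tact c s) (tact c t)"
proof -
  assume "omeq s t"
  then have "tact c (s - t) \<in> Krel" unfolding omeq_def by (rule Krel_act)
  then show ?thesis unfolding omeq_def by (simp only: tact_diff_r)
qed
lemma omeq_tsmult: "omeq s t \<Longrightarrow> omeq (tsmult r s) (tsmult r t)"
proof -
  assume "omeq s t"
  then have "tsmult r (s - t) \<in> Krel" unfolding omeq_def by (rule Krel_smult)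
  then show ?thesis unfolding omeq_def by (simp only: tsmult_diff_r)
qed
lemma omeq_sum: "(\<And>x. x \<in> S \<Longrightarrow> omeq (f x) (g x)) \<Longrightarrow> omeq (sum f S) (sum g S)"
proof (induction S rule: infinite_finite_induct)
  case (infinite A) then show ?case by (simp add: omeq_refl)
next
  case empty then show ?case by (simp add: omeq_refl)
next
  case (insert x F)
  then have "omeq (f x) (g x)" "omeq (sum f F) (sum g F)" by auto
  then have "omeq (f x + sum f F) (g x + sum g F)" by (rule omeq_add)
  then show ?case using insert(1,2) by simp
qed

lemma gam1_dpA: "gam 1 \<in> dpA" by (simp add: dpA_def gam_def lookup_single)

abbreviation Phi where "Phi ph n \<equiv> phin ph n (dd (gam 1))"

lemma sum_split0: "(n::nat) \<ge> 1 \<Longrightarrow> sum f {..<n} = f 0 + sum f {1..<n}"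
  by (simp add: atLeast0LessThan[symmetric] sum.atLeast_Suc_lessThan)

lemma part1:
  assumes "is_free_DP_structure g" "is_DP_derivation_d g ph" "n \<ge> 1"
  shows "omeq (dd (gam n)) (\<Sum>i<n. tact (gam i) (Phi ph (n - i)))"
proof -
  have gg: "\<And>k. k \<ge> 1 \<Longrightarrow> g k (gam 1) = gam k" using assms(1) by (simp add: is_free_DP_structure_def)
  have "omeq (dd (g n (gam 1)))
        (Phi ph n + (\<Sum>i\<in>{1..<n}. tact (g i (gam 1)) (Phi ph (n - i))))"
    using assms(2,3) gam1_dpA unfolding is_DP_derivation_d_def by blast
  moreover have "(\<Sum>i\<in>{1..<n}. tact (g i (gam 1)) (Phi ph (n - i))) = (\<Sum>i\<in>{1..<n}. tact (gam i) (Phi ph (n - i)))"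
    by (intro sum.cong refl) (metis atLeastLessThan_iff gg)
  moreover have "(\<Sum>i<n. tact (gam i) (Phi ph (n - i))) = Phi ph n + (\<Sum>i\<in>{1..<n}. tact (gam i) (Phi ph (n - i)))"
    using assms(3) by (simp add: sum_split0 tact_gam0)
  ultimately show ?thesis using gg[OF assms(3)] by simp
qed

lemma alt_choose: "(\<Sum>i\<le>k. (-1)^i * of_nat (k choose i)) = (if k = 0 then 1 else (0::'a::comm_ring_1))"
  using choose_alternating_sum[of k] by auto

lemma part2:
  assumes "is_free_DP_structure g" "is_DP_derivation_d g ph" "n \<ge> 1"
  shows "omeq (Phi ph n) (\<Sum>i<n. tsmult ((-1) ^ i) (tact (gam i) (dd (gam (n - i)))))"
proof -
  define h where "h i j = tsmult ((-1)^i * of_nat ((i + j) choose i)) (tact (gam (i + j)) (Phi ph (n - (i + j))))" for i j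
  have "omeq (\<Sum>i<n. tsmult ((-1) ^ i) (tact (gam i) (dd (gam (n - i)))))
             (\<Sum>i<n. tsmult ((-1) ^ i) (tact (gam i) (\<Sum>j<n - i. tact (gam j) (Phi ph (n - i - j)))))"
    by (rule omeq_sum, rule omeq_tsmult, rule omeq_tact, rule part1[OF assms(1,2)]) auto
  also have "(\<Sum>i<n. tsmult ((-1) ^ i) (tact (gam i) (\<Sum>j<n - i. tact (gam j) (Phi ph (n - i - j)))))
      = (\<Sum>i<n. \<Sum>j<n - i. h i j)"
    by (simp add: h_def tact_sum_r tsmult_sum_r tact_assoc dpmult_gg tact_smult_l tsmult_tsmult)
  also have "\<dots> = (\<Sum>(i, j)\<in>{(i, j). i + j < n}. h i j)"
    by (subst sum.Sigma) (auto intro!: sum.cong)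
  also have "\<dots> = (\<Sum>k<n. \<Sum>i\<le>k. h i (k - i))"
    by (rule sum.triangle_reindex)
  also have "\<dots> = (\<Sum>k<n. tsmult (\<Sum>i\<le>k. (-1)^i * of_nat (k choose i)) (tact (gam k) (Phi ph (n - k))))"
    by (rule sum.cong[OF refl], simp add: tsmult_sum_l h_def)
  also have "\<dots> = Phi ph n"
    using assms(3) by (simp add: alt_choose sum_split0 tact_gam0)
  finally show ?thesis by (rule omeq_sym)
qed


definition Psi :: "nat \<Rightarrow> 'r::comm_ring_1 ten \<Rightarrow> 'r dpa" where
  "Psi q t = lext (\<lambda>k v. Poly_Mapping.single (fst k + snd k - q)
      (if q \<le> snd k then v * of_nat ((fst k + snd k - q) choose fst k) else 0)) t"

lemma Psi_single: "Psi q (Poly_Mapping.single (i, j) v) =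
   Poly_Mapping.single (i + j - q) (if q \<le> j then v * of_nat ((i + j - q) choose i) else 0)"
  by (simp add: Psi_def lext_single)

lemma Psi_add: "Psi q (s + t) = Psi q s + Psi q t"
  unfolding Psi_def by (rule lext_add) (simp_all add: distrib_right single_add)

lemma addv_Psi: "addv (Psi q)" by (simp add: addv_def Psi_add)

lemma Psi_zero [simp]: "Psi q 0 = 0" using addv_zero[OF addv_Psi] .
lemma Psi_diff: "Psi q (s - t) = Psi q s - Psi q t" using addv_diff[OF addv_Psi] .
lemma Psi_minus: "Psi q (- t) = - Psi q t" using addv_minus[OF addv_Psi] .
lemma Psi_sum: "Psi q (sum h S) = (\<Sum>x\<in>S. Psi q (h x))" using addv_sum[OF addv_Psi] .

lemma Psi_tsmult: "Psi q (tsmult r t) = dpsmult r (Psi q t)"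
proof -
  have "(\<lambda>t. Psi q (tsmult r t)) = (\<lambda>t. dpsmult r (Psi q t))"
  proof (rule additive_eq')
    show "addv (\<lambda>t. Psi q (tsmult r t))" by (rule addv_comp[OF addv_Psi addv_tsmult])
    show "addv (\<lambda>t. dpsmult r (Psi q t))" by (rule addv_comp[OF addv_dpsmult addv_Psi])
    fix k :: "nat \<times> nat" and v
    obtain i j where k: "k = (i, j)" by (cases k) auto
    show "Psi q (tsmult r (Poly_Mapping.single k v)) = dpsmult r (Psi q (Poly_Mapping.single k v))"
      by (simp add: k Psi_single algebra_simps)
  qed
  from fun_cong[OF this, of t] show ?thesis by (simp only:)
qed

lemma Psi_tact_ss: "Psi q (tact (Poly_Mapping.single m w) (Poly_Mapping.single (i, j) v)) =
   dpmult (Poly_Mapping.single m w) (Psi q (Poly_Mapping.single (i, j) v))"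
proof (cases "q \<le> j")
  case True
  then obtain r where j: "j = q + r" using le_Suc_ex by blast
  have e: "of_nat ((m+i+r) choose (m+i)) * of_nat ((m+i) choose m) =
           (of_nat ((m+i+r) choose m) * of_nat ((i+r) choose i) :: 'a::comm_ring_1)"
    using arg_cong[OF multinom[of m i r], where f="of_nat :: nat \<Rightarrow> 'a"] by simp
  have a1: "m + i + j - q = m + i + r" "i + j - q = i + r" using j by auto
  show ?thesis using True
    apply (simp add: tact_ss Psi_single a1)
    using e by (simp add: algebra_simps)
next
  case False
  then show ?thesis by (simp add: tact_ss Psi_single)
qed

lemma Psi_tact:
  fixes c :: "'r::comm_ring_1 dpa"
  shows "Psi q (tact c t) = dpmult c (Psi q t)"
proof -
  have "(\<lambda>t. Psi q (tact c t)) = (\<lambda>t. dpmult c (Psi q t))"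
  proof (rule additive_eq')
    show "addv (\<lambda>t. Psi q (tact c t))" by (rule addv_comp[OF addv_Psi addv_tact2])
    show "addv (\<lambda>t. dpmult c (Psi q t))" by (rule addv_comp[OF addv_dpmult2 addv_Psi])
    fix k :: "nat \<times> nat" and v :: 'r
    obtain i j where k: "k = (i, j)" by (cases k) auto
    have "(\<lambda>c. Psi q (tact c (Poly_Mapping.single (i, j) v))) = (\<lambda>c. dpmult c (Psi q (Poly_Mapping.single (i, j) v)))"
    proof (rule additive_eq')
      show "addv (\<lambda>c. Psi q (tact c (Poly_Mapping.single (i, j) v)))" by (rule addv_comp[OF addv_Psi addv_tact1])
      show "addv (\<lambda>c. dpmult c (Psi q (Poly_Mapping.single (i, j) v)))" by (rule addv_dpmult1)
      fix m w show "Psi q (tact (Poly_Mapping.single m w) (Poly_Mapping.single (i, j) v)) =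
          dpmult (Poly_Mapping.single m w) (Psi q (Poly_Mapping.single (i, j) v))" by (rule Psi_tact_ss)
    qed
    from fun_cong[OF this, of c] k
    show "Psi q (tact c (Poly_Mapping.single k v)) = dpmult c (Psi q (Poly_Mapping.single k v))" by (simp only:)
  qed
  from fun_cong[OF this, of t] show ?thesis by (simp only:)
qed

definition pdv :: "nat \<Rightarrow> 'r::comm_ring_1 dpa \<Rightarrow> bool" where
  "pdv N x \<longleftrightarrow> (\<exists>c. x = dpsmult (of_nat N) c)"

lemma pdv_0 [simp]: "pdv N 0" unfolding pdv_def by (rule exI[of _ 0]) simp

lemma pdv_add: "pdv N x \<Longrightarrow> pdv N y \<Longrightarrow> pdv N (x + y)"
  unfolding pdv_def by (metis dpsmult_add_r)

lemma pdv_dpsmult: "pdv N x \<Longrightarrow> pdv N (dpsmult r x)"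
  unfolding pdv_def by (metis dpsmult_dpsmult mult.commute)

lemma pdv_neg: "pdv N x \<Longrightarrow> pdv N (- x)"
  by (metis dpsmult_m1 pdv_dpsmult)

lemma pdv_diff: "pdv N x \<Longrightarrow> pdv N y \<Longrightarrow> pdv N (x - y)"
  by (metis diff_conv_add_uminus pdv_add pdv_neg)

lemma pdv_dpmult: "pdv N x \<Longrightarrow> pdv N (dpmult c x)"
  unfolding pdv_def by (metis dpmult_smultr)

lemma pdv_sum: "(\<And>x. x \<in> S \<Longrightarrow> pdv N (h x)) \<Longrightarrow> pdv N (sum h S)"
proof (induction S rule: infinite_finite_induct)
  case (insert x F)
  then have "pdv N (h x)" "pdv N (sum h F)" by auto
  then have "pdv N (h x + sum h F)" by (rule pdv_add)
  then show ?case using insert(1,2) by simp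
qed simp_all

lemma pdv_0_eq: "pdv 0 x \<Longrightarrow> x = 0"
  unfolding pdv_def by auto

lemma pdv_single: "pdv N (Poly_Mapping.single k (of_nat N * y))"
  unfolding pdv_def by (rule exI[of _ "Poly_Mapping.single k y"]) simp


definition Hc :: "nat \<Rightarrow> nat \<Rightarrow> bool" where
  "Hc q N \<longleftrightarrow> (\<forall>i j. 1 \<le> i \<longrightarrow> 1 \<le> j \<longrightarrow> q \<le> i + j \<longrightarrow>
     [(i + j) choose i = (if q \<le> j then (i + j - q) choose i else 0) + (if q \<le> i then (i + j - q) choose j else 0)] (mod N))"

lemma Hc_1: "Hc 1 0"
  unfolding Hc_def
proof (intro allI impI)
  fix i j :: nat assume ij: "1 \<le> i" "1 \<le> j" "1 \<le> i + j"
  have "(i + j) choose i = ((i + j - 1) choose (i - 1)) + ((i + j - 1) choose i)"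
    using ij by (intro choose_reduce_nat) auto
  moreover have "(i + j - 1) choose (i - 1) = (i + j - 1) choose j"
    using ij binomial_symmetric[of "i - 1" "i + j - 1"] by auto
  ultimately show "[(i + j) choose i = (if 1 \<le> j then (i + j - 1) choose i else 0) + (if 1 \<le> i then (i + j - 1) choose j else 0)] (mod 0)"
    using ij by simp
qed

lemma p_dvd_choose_pp:
  assumes p: "prime (p::nat)" and k: "0 < k" "k < p ^ e"
  shows "p dvd (p ^ e choose k)"
proof (rule ccontr)
  assume nd: "\<not> p dvd (p ^ e choose k)"
  have "k * (p ^ e choose k) = p ^ e * ((p ^ e - 1) choose (k - 1))"
    by (rule times_binomial_minus1_eq[OF k(1)])
  then have "p ^ e dvd k * (p ^ e choose k)" by simp
  moreover have "coprime (p ^ e) (p ^ e choose k)"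
    using prime_imp_coprime[OF p nd] by simp
  ultimately have "p ^ e dvd k" by (simp add: coprime_dvd_mult_left_iff)
  then have "p ^ e \<le> k" using k by (intro dvd_imp_le) auto
  then show False using k by simp
qed

lemma Hc_pp:
  assumes p: "prime p" and e: "1 \<le> e"
  shows "Hc (p ^ e) p"
  unfolding Hc_def
proof (intro allI impI)
  fix i j :: nat assume ij: "1 \<le> i" "1 \<le> j" "p ^ e \<le> i + j"
  define q where "q = p ^ e"
  define s where "s = i + j - q"
  have q1: "q > 1" using one_less_power[OF prime_gt_1_nat[OF p], of e] e unfolding q_def by simp
  have n: "i + j = q + s" using ij unfolding s_def q_def by auto
  have "(i + j) choose i = (\<Sum>k\<le>i. (q choose k) * (s choose (i - k)))"
    using vandermonde[of q s i] n by simp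
  moreover have "[(\<Sum>k\<le>i. (q choose k) * (s choose (i - k))) =
       (\<Sum>k\<le>i. (if k = 0 then s choose i else 0) + (if k = q then s choose (i - q) else 0))] (mod p)"
  proof (rule cong_sum)
    fix k assume "k \<in> {..i}"
    show "[(q choose k) * (s choose (i - k)) =
          (if k = 0 then s choose i else 0) + (if k = q then s choose (i - q) else 0)] (mod p)"
    proof (cases "k = 0 \<or> k = q \<or> k > q")
      case True then show ?thesis using q1 by (auto simp: binomial_eq_0)
    next
      case False
      then have "p dvd (q choose k)" unfolding q_def using p_dvd_choose_pp[OF p, of k e] by auto
      then have "[(q choose k) * (s choose (i - k)) = 0] (mod p)" by (simp add: cong_0_iff)
      then show ?thesis using False by simp
    qed
  qed
  moreover have "(\<Sum>k\<le>i. (if k = 0 then s choose i else 0) + (if k = q then s choose (i - q) else 0)) =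
      (s choose i) + (if q \<le> i then s choose (i - q) else 0)"
    by (simp add: sum.distrib)
  moreover have "(if q \<le> j then s choose i else 0) = s choose i"
    using n by (auto intro: binomial_eq_0)
  moreover have "q \<le> i \<Longrightarrow> s choose (i - q) = s choose j"
  proof -
    assume qi: "q \<le> i"
    have a: "i - q \<le> s" "s - (i - q) = j" using n qi by arith+
    show ?thesis using binomial_symmetric[OF a(1)] a(2) by simp
  qed
  ultimately show "[(i + j) choose i = (if p ^ e \<le> j then (i + j - p ^ e) choose i else 0) +
       (if p ^ e \<le> i then (i + j - p ^ e) choose j else 0)] (mod p)"
    unfolding q_def[symmetric] s_def[symmetric] by auto
qed


lemma gen_single:
  assumes H: "Hc q N" and ij: "1 \<le> i" "1 \<le> j"
  shows "pdv N (Psi q (ten (Poly_Mapping.single i x) (Poly_Mapping.single j y)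
      - ten (gam 0) (dpmult (Poly_Mapping.single i x) (Poly_Mapping.single j y))
      + ten (Poly_Mapping.single j y) (Poly_Mapping.single i x)))"
proof (cases "q \<le> i + j")
  case False
  then show ?thesis by (simp add: gam_def Psi_add Psi_diff Psi_single)
next
  case True
  define s where "s = i + j - q"
  define A where "A = (if q \<le> j then (i + j - q) choose i else 0)"
  define B where "B = (i + j) choose i"
  define C where "C = (if q \<le> i then (i + j - q) choose j else 0)"
  have cg: "[B = A + C] (mod N)" using H ij True unfolding Hc_def A_def B_def C_def by blast
  then obtain k1 k2 where k: "A + C + k1 * N = B + k2 * N"
    unfolding cong_iff_lin_nat by (metis add.commute)
  have kr: "of_nat A + of_nat C - of_nat B = (of_nat N * (of_nat k2 - of_nat k1) :: 'a::comm_ring_1)"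
  proof -
    have "(of_nat (A + C + k1 * N) :: 'a) = of_nat (B + k2 * N)" using k by simp
    then show ?thesis by (simp add: algebra_simps)
  qed
  have "Psi q (ten (Poly_Mapping.single i x) (Poly_Mapping.single j y)
      - ten (gam 0) (dpmult (Poly_Mapping.single i x) (Poly_Mapping.single j y))
      + ten (Poly_Mapping.single j y) (Poly_Mapping.single i x)) =
      Poly_Mapping.single s (x * y * of_nat A) - Poly_Mapping.single s (x * y * of_nat B)
        + Poly_Mapping.single s (x * y * of_nat C)"
    using True by (simp add: gam_def Psi_add Psi_diff Psi_single s_def A_def B_def C_def ac_simps)
  also have "\<dots> = Poly_Mapping.single s (x * y * (of_nat A + of_nat C - of_nat B))"
    by (simp only: distrib_left right_diff_distrib single_add single_diff) (simp add: algebra_simps)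
  also have "\<dots> = Poly_Mapping.single s (of_nat N * (x * y * (of_nat k2 - of_nat k1)))"
    by (simp add: kr algebra_simps)
  finally show ?thesis by (simp add: pdv_single)
qed

lemma dpA_keys: "c \<in> dpA \<Longrightarrow> k \<in> Poly_Mapping.keys c \<Longrightarrow> 1 \<le> k"
proof -
  assume a: "c \<in> dpA" "k \<in> Poly_Mapping.keys c"
  have "k \<noteq> 0"
  proof
    assume "k = 0" then show False using a unfolding dpA_def in_keys_iff by simp
  qed
  then show "1 \<le> k" by simp
qed

lemma Psi_Krel:
  fixes x :: "'r::comm_ring_1 ten"
  assumes H: "Hc q N"
  shows "x \<in> Krel \<Longrightarrow> pdv N (Psi q x)"
proof (induction rule: Krel.induct)
  case Krel_zero then show ?case by simp
next
  case (Krel_add x y) then show ?case by (simp add: Psi_add pdv_add)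
next
  case (Krel_smult x r) then show ?case by (simp add: Psi_tsmult pdv_dpsmult)
next
  case (Krel_act x c) then show ?case by (simp add: Psi_tact pdv_dpmult)
next
  case (Krel_gen a b)
  define G :: "'r dpa \<Rightarrow> 'r dpa \<Rightarrow> 'r dpa" where "G a b = Psi q (ten a b - ten (gam 0) (dpmult a b) + ten b a)" for a b
  have ad1: "addv (\<lambda>a. G a b)" for b
    unfolding addv_def G_def by (simp only: ten_addl ten_addr dpmult_addl Psi_add Psi_diff) (simp add: algebra_simps)
  have ad2: "addv (\<lambda>b. G a b)" for a
    unfolding addv_def G_def by (simp only: ten_addl ten_addr dpmult_addr Psi_add Psi_diff) (simp add: algebra_simps)
  have "G a b = lext (\<lambda>k v. G (Poly_Mapping.single k v) b) a"
    by (rule addv_rep[OF ad1])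
  also have "pdv N \<dots>"
    unfolding lext_def
  proof (rule pdv_sum)
    fix i assume i: "i \<in> Poly_Mapping.keys a"
    have "G (Poly_Mapping.single i (Poly_Mapping.lookup a i)) b =
        lext (\<lambda>k v. G (Poly_Mapping.single i (Poly_Mapping.lookup a i)) (Poly_Mapping.single k v)) b"
      by (rule addv_rep[OF ad2])
    also have "pdv N \<dots>"
      unfolding lext_def
    proof (rule pdv_sum)
      fix j assume j: "j \<in> Poly_Mapping.keys b"
      show "pdv N (G (Poly_Mapping.single i (Poly_Mapping.lookup a i)) (Poly_Mapping.single j (Poly_Mapping.lookup b j)))"
        unfolding G_def by (rule gen_single[OF H dpA_keys[OF Krel_gen(1) i] dpA_keys[OF Krel_gen(2) j]])
    qed
    finally show "pdv N (G (Poly_Mapping.single i (Poly_Mapping.lookup a i)) b)" .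
  qed
  finally show ?case unfolding G_def .
qed

lemma Psi_omeq: "Hc q N \<Longrightarrow> omeq s t \<Longrightarrow> pdv N (Psi q s - Psi q t)"
  unfolding omeq_def using Psi_Krel[of q N "s - t"] by (simp only: Psi_diff)


lemma single_sum: "Poly_Mapping.single k (sum f S) = (\<Sum>x\<in>S. Poly_Mapping.single k (f x))"
  by (induction S rule: infinite_finite_induct) (simp_all add: single_add)

lemma Psi_dx: "1 \<le> q \<Longrightarrow> Psi q (dd (gam 1)) = (if q = 1 then gam 0 else 0)"
  unfolding dd_gam by (auto simp: Psi_single gam_def)

definition Exx :: "nat \<Rightarrow> 'r::comm_ring_1 ten" where
  "Exx n = (\<Sum>i<n. tsmult ((-1) ^ i) (tact (gam i) (dd (gam (n - i)))))"

lemma Psi_E: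
  assumes q: "1 \<le> q" and n: "1 \<le> n"
  shows "Psi q (Exx n :: 'r::comm_ring_1 ten) = (if q = n then gam 0 else 0)"
proof -
  have "Psi q (Exx n :: 'r ten) = (\<Sum>i<n. Poly_Mapping.single (n - q)
        (if q \<le> n - i then (-1) ^ i * of_nat ((n - q) choose i) else (0::'r)))"
    unfolding Exx_def Psi_sum
    by (rule sum.cong) (auto simp: tact_gam_dd Psi_tsmult Psi_single)
  also have "\<dots> = Poly_Mapping.single (n - q)
        (\<Sum>i<n. if q \<le> n - i then (-1) ^ i * of_nat ((n - q) choose i) else (0::'r))"
    by (simp add: single_sum)
  also have "\<dots> = (if q = n then gam 0 else 0)"
  proof (cases "q \<le> n")
    case False
    have "(\<Sum>i<n. if q \<le> n - i then (-1) ^ i * of_nat ((n - q) choose i) else (0::'r)) = 0"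
      using False by (intro sum.neutral) auto
    then show ?thesis using False by auto
  next
    case True
    have st: "{i \<in> {..<n}. q \<le> n - i} = {..n - q}" "{x. x < n \<and> q \<le> n - x} = {..n - q}" using q True by auto
    have "(\<Sum>i<n. if q \<le> n - i then (-1) ^ i * of_nat ((n - q) choose i) else (0::'r)) =
          (\<Sum>i\<le>n - q. (-1) ^ i * of_nat ((n - q) choose i))"
      by (subst sum.inter_filter[symmetric]) (simp_all add: st)
    also have "\<dots> = (if n - q = 0 then 1 else 0)" by (rule alt_choose)
    finally show ?thesis using True by (auto simp: gam_def)
  qed
  finally show ?thesis .
qed

lemma Psi_Phi:
  assumes "is_free_DP_structure g" "is_DP_derivation_d g ph" "Hc q N" "1 \<le> q" "1 \<le> n"
  shows "pdv N (Psi q (Phi ph n) - (if q = n then gam 0 else 0))"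
proof -
  have "omeq (Phi ph n) (Exx n)" unfolding Exx_def by (rule part2[OF assms(1,2,5)])
  then have a: "pdv N (Psi q (Phi ph n) - Psi q (Exx n))" by (rule Psi_omeq[OF assms(3)])
  show ?thesis using a by (simp only: Psi_E[OF assms(4,5)])
qed

lemma phin_pp:
  assumes "prime p" "1 \<le> e"
  shows "phin ph (p ^ e) t = (ph p ^^ e) t"
proof -
  have "p ^ e \<noteq> 1" using assms prime_gt_1_nat[OF assms(1)] by simp
  moreover have "primepow (p ^ e)" using assms by simp
  moreover have "aprimedivisor (p ^ e) = p" using assms by (simp add: aprimedivisor_prime_power)
  moreover have "multiplicity p (p ^ e) = e" using assms by (simp add: multiplicity_prime_power prime_imp_prime_elem)
  ultimately show ?thesis by (simp add: phin_def)
qed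

lemma dx_ten: "dd (gam 1) \<in> tenspace"
  unfolding dd_gam by (simp add: tenspace_def)

lemma funpow_ten:
  assumes "is_UA_structure ph" "prime p"
  shows "(ph p ^^ e) (dd (gam 1)) \<in> tenspace"
proof (induction e)
  case 0 show ?case using dx_ten by simp
next
  case (Suc e) then show ?case using assms unfolding is_UA_structure_def by simp
qed

lemma tors:
  assumes "is_UA_structure ph" "prime p" "1 \<le> e"
  shows "omeq (tact (dpsmult (of_nat p) c) (Phi ph (p ^ e))) 0"
proof -
  obtain e' where e: "e = Suc e'" using assms(3) by (cases e) auto
  let ?Y = "(ph p ^^ e') (dd (gam 1))"
  have Y: "?Y \<in> tenspace" by (rule funpow_ten[OF assms(1,2)])
  have "omeq (tsmult (of_nat p) (ph p ?Y)) 0" using assms(1,2) Y unfolding is_UA_structure_def by blast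
  then have "omeq (tact c (tsmult (of_nat p) (ph p ?Y))) (tact c 0)" by (rule omeq_tact)
  moreover have "Phi ph (p ^ e) = ph p ?Y" using phin_pp[OF assms(2,3)] e by simp
  ultimately show ?thesis by (simp add: tact_smult_l tact_smult_r)
qed


definition Rep' :: "(nat \<Rightarrow> 'r ten \<Rightarrow> 'r ten) \<Rightarrow> 'r::comm_ring_1 ten \<Rightarrow> bool" where
  "Rep' ph t \<longleftrightarrow> (\<exists>a B S. finite S \<and> S \<subseteq> {(p, e). prime p \<and> 1 \<le> e} \<and>
     omeq t (tact a (dd (gam 1)) + (\<Sum>x\<in>S. tact (B x) (Phi ph (fst x ^ snd x)))))"

lemma Rep_omeq: "omeq t t' \<Longrightarrow> Rep' ph t' \<Longrightarrow> Rep' ph t"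
proof -
  assume o: "omeq t t'" and r: "Rep' ph t'"
  obtain a B S where A: "finite S" "S \<subseteq> {(p, e). prime p \<and> 1 \<le> e}"
    "omeq t' (tact a (dd (gam 1)) + (\<Sum>x\<in>S. tact (B x) (Phi ph (fst x ^ snd x))))"
    using r unfolding Rep'_def by blast
  have "omeq t (tact a (dd (gam 1)) + (\<Sum>x\<in>S. tact (B x) (Phi ph (fst x ^ snd x))))"
    by (rule omeq_trans[OF o A(3)])
  then show ?thesis unfolding Rep'_def using A(1,2) by blast
qed

lemma Rep_0: "Rep' ph 0"
  unfolding Rep'_def
  by (rule exI[of _ 0], rule exI[of _ "\<lambda>_. 0"], rule exI[of _ "{}"]) (simp add: omeq_refl)

lemma Rep_add:
  assumes "Rep' ph s" "Rep' ph t"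
  shows "Rep' ph (s + t)"
proof -
  obtain a B S where A: "finite S" "S \<subseteq> {(p, e). prime p \<and> 1 \<le> e}"
    "omeq s (tact a (dd (gam 1)) + (\<Sum>x\<in>S. tact (B x) (Phi ph (fst x ^ snd x))))"
    using assms(1) unfolding Rep'_def by blast
  obtain a' B' S' where A': "finite S'" "S' \<subseteq> {(p, e). prime p \<and> 1 \<le> e}"
    "omeq t (tact a' (dd (gam 1)) + (\<Sum>x\<in>S'. tact (B' x) (Phi ph (fst x ^ snd x))))"
    using assms(2) unfolding Rep'_def by blast
  define B'' where "B'' x = (if x \<in> S then B x else 0) + (if x \<in> S' then B' x else 0)" for x
  have fin: "finite (S \<union> S')" using A(1) A'(1) by simp
  have s1: "(\<Sum>x\<in>S \<union> S'. tact (if x \<in> S then B x else 0) (Phi ph (fst x ^ snd x))) =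
        (\<Sum>x\<in>S. tact (B x) (Phi ph (fst x ^ snd x)))"
  proof -
    have "(\<Sum>x\<in>S \<union> S'. tact (if x \<in> S then B x else 0) (Phi ph (fst x ^ snd x))) =
          (\<Sum>x\<in>S \<union> S'. if x \<in> S then tact (B x) (Phi ph (fst x ^ snd x)) else 0)"
      by (rule sum.cong) auto
    also have "\<dots> = (\<Sum>x\<in>(S \<union> S') \<inter> S. tact (B x) (Phi ph (fst x ^ snd x)))"
      by (rule sum.inter_restrict[OF fin, symmetric])
    also have "(S \<union> S') \<inter> S = S" by blast
    finally show ?thesis .
  qed
  have s2: "(\<Sum>x\<in>S \<union> S'. tact (if x \<in> S' then B' x else 0) (Phi ph (fst x ^ snd x))) =
        (\<Sum>x\<in>S'. tact (B' x) (Phi ph (fst x ^ snd x)))"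
  proof -
    have "(\<Sum>x\<in>S \<union> S'. tact (if x \<in> S' then B' x else 0) (Phi ph (fst x ^ snd x))) =
          (\<Sum>x\<in>S \<union> S'. if x \<in> S' then tact (B' x) (Phi ph (fst x ^ snd x)) else 0)"
      by (rule sum.cong) auto
    also have "\<dots> = (\<Sum>x\<in>(S \<union> S') \<inter> S'. tact (B' x) (Phi ph (fst x ^ snd x)))"
      by (rule sum.inter_restrict[OF fin, symmetric])
    also have "(S \<union> S') \<inter> S' = S'" by blast
    finally show ?thesis .
  qed
  have "tact (a + a') (dd (gam 1)) + (\<Sum>x\<in>S \<union> S'. tact (B'' x) (Phi ph (fst x ^ snd x))) =
      (tact a (dd (gam 1)) + (\<Sum>x\<in>S. tact (B x) (Phi ph (fst x ^ snd x)))) +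
      (tact a' (dd (gam 1)) + (\<Sum>x\<in>S'. tact (B' x) (Phi ph (fst x ^ snd x))))"
    unfolding B''_def tact_addl sum.distrib s1 s2 by (simp add: algebra_simps)
  moreover have "omeq (s + t) ((tact a (dd (gam 1)) + (\<Sum>x\<in>S. tact (B x) (Phi ph (fst x ^ snd x)))) +
      (tact a' (dd (gam 1)) + (\<Sum>x\<in>S'. tact (B' x) (Phi ph (fst x ^ snd x)))))"
    using A(3) A'(3) by (rule omeq_add)
  ultimately show ?thesis unfolding Rep'_def using fin A(2) A'(2)
    by (intro exI[of _ "a + a'"] exI[of _ B''] exI[of _ "S \<union> S'"]) auto
qed

lemma Rep_tact:
  assumes "Rep' ph t"
  shows "Rep' ph (tact c t)"
proof -
  obtain a B S where A: "finite S" "S \<subseteq> {(p, e). prime p \<and> 1 \<le> e}"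
    "omeq t (tact a (dd (gam 1)) + (\<Sum>x\<in>S. tact (B x) (Phi ph (fst x ^ snd x))))"
    using assms(1) unfolding Rep'_def by blast
  have "omeq (tact c t) (tact c (tact a (dd (gam 1)) + (\<Sum>x\<in>S. tact (B x) (Phi ph (fst x ^ snd x)))))"
    using A(3) by (rule omeq_tact)
  moreover have "tact c (tact a (dd (gam 1)) + (\<Sum>x\<in>S. tact (B x) (Phi ph (fst x ^ snd x)))) =
      tact (dpmult c a) (dd (gam 1)) + (\<Sum>x\<in>S. tact (dpmult c (B x)) (Phi ph (fst x ^ snd x)))"
    by (simp add: tact_addr tact_sum_r tact_assoc)
  ultimately show ?thesis unfolding Rep'_def using A(1,2)
    by (intro exI[of _ "dpmult c a"] exI[of _ "\<lambda>x. dpmult c (B x)"] exI[of _ S]) auto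
qed

lemma Rep_sum: "(\<And>x. x \<in> A \<Longrightarrow> Rep' ph (h x)) \<Longrightarrow> Rep' ph (sum h A)"
proof (induction A rule: infinite_finite_induct)
  case (infinite A) then show ?case by (simp add: Rep_0)
next
  case empty then show ?case by (simp add: Rep_0)
next
  case (insert x F)
  then have "Rep' ph (h x)" "Rep' ph (sum h F)" by auto
  then have "Rep' ph (h x + sum h F)" by (rule Rep_add)
  then show ?case using insert(1,2) by simp
qed

lemma Rep_basic:
  assumes "1 \<le> m"
  shows "Rep' ph (tact c (Phi ph m))"
proof (cases "m = 1")
  case True
  then have "Phi ph m = dd (gam 1)" by (simp add: phin_def)
  then show ?thesis unfolding Rep'_def
    by (intro exI[of _ c] exI[of _ "\<lambda>_. 0"] exI[of _ "{}"]) (simp add: omeq_refl)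
next
  case False
  show ?thesis
  proof (cases "primepow m")
    case True
    then obtain p k where pk: "prime p" "k > 0" "m = p ^ k" unfolding primepow_def by blast
    show ?thesis unfolding Rep'_def using pk
      by (intro exI[of _ 0] exI[of _ "\<lambda>_. c"] exI[of _ "{(p, k)}"]) (simp add: omeq_refl)
  next
    case np: False
    then have "Phi ph m = 0" using False by (simp add: phin_def)
    then show ?thesis by (simp add: Rep_0)
  qed
qed

lemma Rep_single:
  assumes "is_free_DP_structure g" "is_DP_derivation_d g ph" "1 \<le> j"
  shows "Rep' ph (Poly_Mapping.single (i, j) v)"
proof -
  let ?c = "dpsmult v (gam i)"
  have e: "Poly_Mapping.single (i, j) v = tact ?c (dd (gam j))"
    by (simp add: tact_smult_l tact_gam_dd)
  have "omeq (tact ?c (dd (gam j))) (tact ?c (\<Sum>l<j. tact (gam l) (Phi ph (j - l))))"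
    by (rule omeq_tact, rule part1[OF assms])
  moreover have "tact ?c (\<Sum>l<j. tact (gam l) (Phi ph (j - l))) = (\<Sum>l<j. tact (dpmult ?c (gam l)) (Phi ph (j - l)))"
    by (simp add: tact_sum_r tact_assoc)
  moreover have "Rep' ph (\<Sum>l<j. tact (dpmult ?c (gam l)) (Phi ph (j - l)))"
    by (rule Rep_sum, rule Rep_basic) auto
  ultimately have "Rep' ph (tact ?c (dd (gam j)))" by (simp add: Rep_omeq)
  then show ?thesis by (simp only: e)
qed

lemma Rep_all:
  assumes "is_free_DP_structure g" "is_DP_derivation_d g ph" "t \<in> tenspace"
  shows "Rep' ph t"
proof -
  have eq: "(\<Sum>k\<in>Poly_Mapping.keys t. Poly_Mapping.single k (Poly_Mapping.lookup t k)) = t"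
    by (rule pm_monomials[symmetric])
  have "Rep' ph (\<Sum>k\<in>Poly_Mapping.keys t. Poly_Mapping.single k (Poly_Mapping.lookup t k))"
  proof (rule Rep_sum)
    fix k assume k: "k \<in> Poly_Mapping.keys t"
    obtain i j where ij: "k = (i, j)" by (cases k) auto
    have "1 \<le> j" using assms(3) k ij unfolding tenspace_def by auto
    then show "Rep' ph (Poly_Mapping.single k (Poly_Mapping.lookup t k))"
      unfolding ij by (rule Rep_single[OF assms(1,2)])
  qed
  then show ?thesis by (simp only: eq)
qed


lemma pp_ge1: "prime (p::nat) \<Longrightarrow> 1 \<le> p ^ e"
  using prime_gt_0_nat by (simp add: Suc_le_eq)

lemma pp_ne1: "prime (p::nat) \<Longrightarrow> 1 \<le> e \<Longrightarrow> p ^ e \<noteq> 1"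
  using prime_gt_1_nat[of p] by simp

lemma part5:
  assumes "is_free_DP_structure g" "is_DP_derivation_d g ph" "is_UA_structure ph" "prime p" "1 \<le> e"
  shows "omeq (tact c (Phi ph (p ^ e))) 0 \<longleftrightarrow> (\<exists>c'. c = dpsmult (of_nat p) c')"
proof
  assume "\<exists>c'. c = dpsmult (of_nat p) c'"
  then obtain c' where "c = dpsmult (of_nat p) c'" by blast
  then show "omeq (tact c (Phi ph (p ^ e))) 0" using tors[OF assms(3,4,5)] by simp
next
  assume X: "omeq (tact c (Phi ph (p ^ e))) 0"
  define q where "q = p ^ e"
  have H: "Hc q p" unfolding q_def by (rule Hc_pp[OF assms(4,5)])
  have q1: "1 \<le> q" unfolding q_def using pp_ge1[OF assms(4)] .
  have "tact c (Phi ph q) \<in> Krel" using X unfolding omeq_def q_def by simp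
  then have "pdv p (Psi q (tact c (Phi ph q)))" by (rule Psi_Krel[OF H])
  then have a: "pdv p (dpmult c (Psi q (Phi ph q)))" by (simp add: Psi_tact)
  have D: "pdv p (Psi q (Phi ph q) - gam 0)"
    using Psi_Phi[OF assms(1,2) H q1 q1] by simp
  have "dpmult c (Psi q (Phi ph q)) = dpmult c (gam 0 + (Psi q (Phi ph q) - gam 0))" by simp
  also have "\<dots> = c + dpmult c (Psi q (Phi ph q) - gam 0)" by (simp only: dpmult_addr dpmult_gam0r)
  finally have "c = dpmult c (Psi q (Phi ph q)) - dpmult c (Psi q (Phi ph q) - gam 0)" by simp
  moreover have "pdv p (dpmult c (Psi q (Phi ph q)) - dpmult c (Psi q (Phi ph q) - gam 0))"
    by (rule pdv_diff[OF a pdv_dpmult[OF D]])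
  ultimately have "pdv p c" by simp
  then show "\<exists>c'. c = dpsmult (of_nat p) c'" unfolding pdv_def .
qed

lemma part4:
  assumes fr: "is_free_DP_structure g" and dp: "is_DP_derivation_d g ph" and ua: "is_UA_structure ph"
    and fin: "finite S" and SPE: "S \<subseteq> {(p, e). prime p \<and> 1 \<le> e}"
    and om: "omeq (tact a (dd (gam 1)) + (\<Sum>(p, e)\<in>S. tact (b p e) (Phi ph (p ^ e)))) 0"
  shows "a = 0 \<and> (\<forall>(p, e)\<in>S. omeq (tact (b p e) (Phi ph (p ^ e))) 0)"
proof -
  define B where "B x = b (fst x) (snd x)" for x
  define T where "T = tact a (dd (gam 1)) + (\<Sum>(p, e)\<in>S. tact (b p e) (Phi ph (p ^ e)))"
  have TK: "T \<in> Krel" using om unfolding omeq_def T_def by simp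
  have PT: "Psi q T = dpmult a (Psi q (dd (gam 1))) + (\<Sum>x\<in>S. dpmult (B x) (Psi q (Phi ph (fst x ^ snd x))))" for q
    unfolding T_def by (simp add: Psi_add Psi_sum Psi_tact split_def B_def)
  have SP: "prime (fst x) \<and> 1 \<le> snd x" if "x \<in> S" for x using SPE that by auto
  have a0: "a = 0"
  proof -
    have z: "Psi 1 (Phi ph (fst x ^ snd x)) = 0" if x: "x \<in> S" for x
    proof -
      have "pdv 0 (Psi 1 (Phi ph (fst x ^ snd x)) - (if 1 = fst x ^ snd x then gam 0 else 0))"
        by (rule Psi_Phi[OF fr dp Hc_1]) (use SP[OF x] pp_ge1 in auto)
      moreover have "1 \<noteq> fst x ^ snd x" using SP[OF x] pp_ne1 by metis
      ultimately show ?thesis using pdv_0_eq by fastforce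
    qed
    have sz: "(\<Sum>x\<in>S. dpmult (B x) (Psi 1 (Phi ph (fst x ^ snd x)))) = 0"
    proof (rule sum.neutral, rule ballI)
      fix x assume x: "x \<in> S"
      show "dpmult (B x) (Psi 1 (Phi ph (fst x ^ snd x))) = 0" by (simp only: z[OF x] dpmult_zero_r)
    qed
    have dx1: "Psi 1 (dd (gam 1)) = gam 0" using Psi_dx[of 1] by simp
    have "Psi 1 T = dpmult a (gam 0) + 0" by (simp only: PT[of 1] sz dx1)
    then have "Psi 1 T = a" by (simp add: dpmult_gam0r)
    moreover have "pdv 0 (Psi 1 T)" by (rule Psi_Krel[OF Hc_1 TK])
    ultimately show ?thesis using pdv_0_eq by metis
  qed
  have bx: "omeq (tact (B x0) (Phi ph (fst x0 ^ snd x0))) 0" if x0: "x0 \<in> S" for x0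
  proof -
    define p0 where "p0 = fst x0"
    define e0 where "e0 = snd x0"
    define q where "q = p0 ^ e0"
    have p0: "prime p0" "1 \<le> e0" using SP[OF x0] unfolding p0_def e0_def by auto
    have H: "Hc q p0" unfolding q_def by (rule Hc_pp[OF p0])
    have q1: "1 \<le> q" "q \<noteq> 1" unfolding q_def using pp_ge1[OF p0(1)] pp_ne1[OF p0] by auto
    define D where "D x = Psi q (Phi ph (fst x ^ snd x)) - (if q = fst x ^ snd x then gam 0 else 0)" for x
    have Dp: "pdv p0 (D x)" if x: "x \<in> S" for x
      unfolding D_def by (rule Psi_Phi[OF fr dp H q1(1)]) (use SP[OF x] pp_ge1 in auto)
    have qeq: "(q = fst x ^ snd x) \<longleftrightarrow> x = x0" if x: "x \<in> S" for x
    proof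
      assume "q = fst x ^ snd x"
      then have "p0 ^ e0 = fst x ^ snd x" unfolding q_def .
      then have "p0 = fst x" "e0 = snd x" using prime_power_inj'[OF p0(1), of "fst x" e0 "snd x"] SP[OF x] p0 by auto
      then show "x = x0" unfolding p0_def e0_def by (simp add: prod_eq_iff)
    next
      assume "x = x0" then show "q = fst x ^ snd x" unfolding q_def p0_def e0_def by simp
    qed
    have tm: "dpmult (B x) (Psi q (Phi ph (fst x ^ snd x))) =
        (if x = x0 then B x else 0) + dpmult (B x) (D x)" if x: "x \<in> S" for x
    proof -
      have "Psi q (Phi ph (fst x ^ snd x)) = (if q = fst x ^ snd x then gam 0 else 0) + D x"
        unfolding D_def by simp
      then show ?thesis using qeq[OF x] by (simp add: dpmult_addr dpmult_gam0r)
    qed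
    have dxq: "Psi q (dd (gam 1)) = 0" using Psi_dx[OF q1(1)] q1(2) by simp
    have sm: "(\<Sum>x\<in>S. dpmult (B x) (Psi q (Phi ph (fst x ^ snd x)))) =
        (\<Sum>x\<in>S. (if x = x0 then B x else 0) + dpmult (B x) (D x))"
      by (rule sum.cong[OF refl], rule tm)
    have "Psi q T = (\<Sum>x\<in>S. (if x = x0 then B x else 0) + dpmult (B x) (D x))"
      by (simp only: PT[of q] dxq dpmult_zero_r add_0_left sm)
    also have "\<dots> = B x0 + (\<Sum>x\<in>S. dpmult (B x) (D x))"
      using x0 fin by (simp add: sum.distrib)
    finally have eqT: "B x0 = Psi q T - (\<Sum>x\<in>S. dpmult (B x) (D x))" by simp
    have "pdv p0 (Psi q T)" by (rule Psi_Krel[OF H TK])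
    moreover have "pdv p0 (\<Sum>x\<in>S. dpmult (B x) (D x))" by (rule pdv_sum, rule pdv_dpmult, rule Dp)
    ultimately have "pdv p0 (B x0)" unfolding eqT by (rule pdv_diff)
    then obtain c' where "B x0 = dpsmult (of_nat p0) c'" unfolding pdv_def by blast
    then show ?thesis using tors[OF ua p0] unfolding q_def p0_def e0_def by simp
  qed
  show ?thesis using a0 bx unfolding B_def by auto
qed


theorem mainTheorem8:
  fixes g :: "nat \<Rightarrow> 'r::comm_ring_1 dpa \<Rightarrow> 'r dpa"
    and ph :: "nat \<Rightarrow> 'r ten \<Rightarrow> 'r ten"
  assumes "is_free_DP_structure g"
    and "is_UA_structure ph"
    and "is_DP_derivation_d g ph"
  shows "(\<forall>n\<ge>1. omeq (dd (gam n))
              (\<Sum>i<n. tact (gam i) (phin ph (n - i) (dd (gam 1)))))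
       \<and> (\<forall>n\<ge>1. omeq (phin ph n (dd (gam 1)))
              (\<Sum>i<n. tsmult ((-1) ^ i) (tact (gam i) (dd (gam (n - i))))))
       \<and> (\<forall>t\<in>tenspace. \<exists>a b S. finite S \<and> S \<subseteq> {(p, e). prime p \<and> 1 \<le> e} \<and>
              omeq t (tact a (dd (gam 1)) +
                      (\<Sum>(p, e)\<in>S. tact (b p e) (phin ph (p ^ e) (dd (gam 1))))))
       \<and> (\<forall>a b S. finite S \<and> S \<subseteq> {(p, e). prime p \<and> 1 \<le> e} \<and>
              omeq (tact a (dd (gam 1)) +
                    (\<Sum>(p, e)\<in>S. tact (b p e) (phin ph (p ^ e) (dd (gam 1))))) 0
            \<longrightarrow> a = 0 \<and> (\<forall>(p, e)\<in>S. omeq (tact (b p e) (phin ph (p ^ e) (dd (gam 1)))) 0))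
       \<and> (\<forall>p e c. prime p \<and> 1 \<le> e \<longrightarrow>
              (omeq (tact c (phin ph (p ^ e) (dd (gam 1)))) 0 \<longleftrightarrow>
               (\<exists>c'. c = dpsmult (of_nat p) c')))"
proof -
  have p1: "\<forall>n\<ge>1. omeq (dd (gam n)) (\<Sum>i<n. tact (gam i) (phin ph (n - i) (dd (gam 1))))"
    using part1[OF assms(1,3)] by blast
  have p2: "\<forall>n\<ge>1. omeq (phin ph n (dd (gam 1)))
              (\<Sum>i<n. tsmult ((-1) ^ i) (tact (gam i) (dd (gam (n - i)))))"
    using part2[OF assms(1,3)] by blast
  have p3: "\<forall>t\<in>tenspace. \<exists>a b S. finite S \<and> S \<subseteq> {(p, e). prime p \<and> 1 \<le> e} \<and>
              omeq t (tact a (dd (gam 1)) +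
                      (\<Sum>(p, e)\<in>S. tact (b p e) (phin ph (p ^ e) (dd (gam 1)))))"
  proof
    fix t :: "'r ten" assume t: "t \<in> tenspace"
    obtain a B S where A: "finite S" "S \<subseteq> {(p, e). prime p \<and> 1 \<le> e}"
      "omeq t (tact a (dd (gam 1)) + (\<Sum>x\<in>S. tact (B x) (Phi ph (fst x ^ snd x))))"
      using Rep_all[OF assms(1,3) t] unfolding Rep'_def by blast
    have "(\<Sum>(p, e)\<in>S. tact (curry B p e) (phin ph (p ^ e) (dd (gam 1)))) =
          (\<Sum>x\<in>S. tact (B x) (Phi ph (fst x ^ snd x)))"
      by (simp add: split_def)
    then show "\<exists>a b S. finite S \<and> S \<subseteq> {(p, e). prime p \<and> 1 \<le> e} \<and>
              omeq t (tact a (dd (gam 1)) +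
                      (\<Sum>(p, e)\<in>S. tact (b p e) (phin ph (p ^ e) (dd (gam 1)))))"
      using A by (intro exI[of _ a] exI[of _ "curry B"] exI[of _ S]) simp
  qed
  have p4: "\<forall>a b S. finite S \<and> S \<subseteq> {(p, e). prime p \<and> 1 \<le> e} \<and>
              omeq (tact a (dd (gam 1)) +
                    (\<Sum>(p, e)\<in>S. tact (b p e) (phin ph (p ^ e) (dd (gam 1))))) 0
            \<longrightarrow> a = 0 \<and> (\<forall>(p, e)\<in>S. omeq (tact (b p e) (phin ph (p ^ e) (dd (gam 1)))) 0)"
    using part4[OF assms(1,3,2)] by blast
  have p5: "\<forall>p e c. prime p \<and> 1 \<le> e \<longrightarrow>
              (omeq (tact c (phin ph (p ^ e) (dd (gam 1)))) 0 \<longleftrightarrow>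
               (\<exists>c'. c = dpsmult (of_nat p) c'))"
    using part5[OF assms(1,3,2)] by blast
  show ?thesis using p1 p2 p3 p4 p5 by blast
qed

end
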